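(* Suppose $F_i$ satisfies the Production Function Assumption with condition (b), and $W_i$ satisfies the Labor Cost Assumption and the Growth Assumption. Then for every $\mathbf P\in\mathbb R^N_{>0}$ and $P_E>0$, $$\overline\Pi_i(\mathbf P,P_E)=W_i^*\big(\widetilde\Pi_i(\mathbf P,P_E)\big),$$ where $$\widetilde\Pi_i(\mathbf P,P_E)=\max_{\tilde{\mathbf q}_i\in\mathbb R^N_{\ge0},\,\tilde E_i\ge0}\Big\{P_iF_i(\tilde{\mathbf q}_i,\tilde E_i,1)-\sum_{j=1}^NP_j\tilde q_{ij}-P_E\tilde E_i\Big\}.$$ Moreover, if $W_i$ is strictly convex and differentiable, an optimal input vector $(\mathbf q_i^*,E_i^*,L_i^* )$ for $\overline\Pi_i(\mathbf P,P_E)$ is given by $$L_i^*=(W_i')^{-1}\big(\widetilde\Pi_i(\mathbf P,P_E)\big),\quad q^*_{ij}=\tilde q^*_{ij}L_i^*\ (j=1,\dots,N),\quad E_i^*=\tilde E_i^*L_i^*,$$ where $(\tilde{\mathbf q}_i^*,\tilde E_i^* )$ is a maximiser of the problem defining $\widetilde\Pi_i(\mathbf P,P_E)$.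
   Context: Inputs $(\mathbf q_i,E_i,L_i)\in\mathbb R^{N+2}_{\ge0}$ with $\mathbf q_i=(q_{ij})_{j=1}^N$; production function $F_i:\mathbb R^{N+2}_{\ge0}\to\mathbb R_{\ge0}$; labor cost $W_i:\mathbb R_{\ge0}\to\mathbb R_{>0}$. Profit $\Pi_i(\mathbf P,P_E,\mathbf q_i,E_i,L_i)=P_iF_i(\mathbf q_i,E_i,L_i)-\sum_jP_jq_{ij}-P_EE_i-W_i(L_i)$, and $\overline\Pi_i(\mathbf P,P_E)=\max_{(\mathbf q_i,E_i,L_i)\in\mathbb R^{N+2}_{\ge0}}\Pi_i$. The convex conjugate is $W_i^*(y)=\max_{L\ge0}\{Ly-W_i(L)\}$, $y\in\mathbb R$. Production Function Assumption (b): $F_i$ increasing in each argument, upper semi-continuous, concave, homogeneous of degree one ($F_i(\lambda\mathbf x)=\lambda F_i(\mathbf x)$ for $\lambda>0$), and $F_i(\mathbf q,E,L)\le c_iL$ for some $c_i<\infty$. Labor Cost Assumption: $W_i$ strictly increasing, lower semi-continuous, convex. Growth Assumption: $\lim_{L\to\infty}W_i(L)/L=+\infty$. *)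

theory Defs
  imports "HOL-Analysis.Analysis"
begin

definition usc_on :: "'a::topological_space set \<Rightarrow> ('a \<Rightarrow> real) \<Rightarrow> bool" where
  "usc_on S f \<longleftrightarrow> (\<forall>x\<in>S. \<forall>a. f x < a \<longrightarrow> eventually (\<lambda>y. f y < a) (at x within S))"

definition lsc_on :: "'a::topological_space set \<Rightarrow> ('a \<Rightarrow> real) \<Rightarrow> bool" where
  "lsc_on S f \<longleftrightarrow> (\<forall>x\<in>S. \<forall>a. a < f x \<longrightarrow> eventually (\<lambda>y. a < f y) (at x within S))"

definition strict_convex_on :: "'a::real_vector set \<Rightarrow> ('a \<Rightarrow> real) \<Rightarrow> bool" where
  "strict_convex_on S f \<longleftrightarrow> (\<forall>x\<in>S. \<forall>y\<in>S. x \<noteq> y \<longrightarrow> (\<forall>t. 0 < t \<and> t < 1 \<longrightarrow>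
      f ((1 - t) *\<^sub>R x + t *\<^sub>R y) < (1 - t) * f x + t * f y))"

definition input_dom :: "((real^'n) \<times> real \<times> real) set" where
  "input_dom = {(q, E, L). (\<forall>j. 0 \<le> q $ j) \<and> 0 \<le> E \<and> 0 \<le> L}"

definition profit ::
  "'n \<Rightarrow> ((real^'n) \<times> real \<times> real \<Rightarrow> real) \<Rightarrow> (real \<Rightarrow> real) \<Rightarrow> real^'n \<Rightarrow> real
    \<Rightarrow> (real^'n) \<times> real \<times> real \<Rightarrow> real" where
  "profit i F W P PE x = (case x of (q, E, L) \<Rightarrow>
      P $ i * F (q, E, L) - (\<Sum>j\<in>UNIV. P $ j * q $ j) - PE * E - W L)"

definition max_profit ::
  "'n \<Rightarrow> ((real^'n) \<times> real \<times> real \<Rightarrow> real) \<Rightarrow> (real \<Rightarrow> real) \<Rightarrow> real^'n \<Rightarrow> real \<Rightarrow> real" where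
  "max_profit i F W P PE = (SUP x\<in>input_dom. profit i F W P PE x)"

definition unit_profit ::
  "'n \<Rightarrow> ((real^'n) \<times> real \<times> real \<Rightarrow> real) \<Rightarrow> real^'n \<Rightarrow> real \<Rightarrow> real^'n \<Rightarrow> real \<Rightarrow> real" where
  "unit_profit i F P PE q E = P $ i * F (q, E, 1) - (\<Sum>j\<in>UNIV. P $ j * q $ j) - PE * E"

definition unit_max_profit ::
  "'n \<Rightarrow> ((real^'n) \<times> real \<times> real \<Rightarrow> real) \<Rightarrow> real^'n \<Rightarrow> real \<Rightarrow> real" where
  "unit_max_profit i F P PE =
     (SUP qE\<in>{(q, E). (\<forall>j. 0 \<le> q $ j) \<and> 0 \<le> E}. unit_profit i F P PE (fst qE) (snd qE))"

definition convex_conj :: "(real \<Rightarrow> real) \<Rightarrow> real \<Rightarrow> real" where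
  "convex_conj W y = (SUP L\<in>{0..}. L * y - W L)"

end

theory Submission
  imports Defs
begin

lemma tangent_at0:
  fixes W :: "real \<Rightarrow> real"
  assumes convex: "convex_on {0..} W" and x: "x > 0"
  and deriv: "(W has_real_derivative T) (at 0 within {0..})"
  shows "W x - W 0 \<ge> T * (x - 0)"
proof -
  let ?A' = "{0::real<..}"
  have "at 0 within ?A' \<noteq> bot" by (simp add: at_within_eq_bot_iff)
  moreover from deriv have "((\<lambda>y. (W y - W 0) / (y - 0)) \<longlongrightarrow> T) (at 0 within ?A')"
    unfolding has_field_derivative_iff by (rule tendsto_mono[rotated]) (intro at_le, auto)
  moreover from eventually_at_right_real[OF x]
    have "eventually (\<lambda>y. (W y - W 0) / (y - 0) \<le> (W x - W 0) / (x - 0)) (at_right 0)"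
  proof eventually_elim
    fix y assume y: "y \<in> {0<..<x}"
    have "W y \<le> (W x - W 0) / (x - 0) * (y - 0) + W 0"
      using y x by (intro convex_onD_Icc' convex_on_subset[OF convex]) auto
    hence "W y - W 0 \<le> (W x - W 0) / (x - 0) * (y - 0)" by simp
    thus "(W y - W 0) / (y - 0) \<le> (W x - W 0) / (x - 0)" using y x by (simp add: field_split_simps)
  qed
  ultimately have "T \<le> (W x - W 0) / (x - 0)" by (simp add: tendsto_upperbound)
  thus ?thesis using x by (simp add: field_simps)
qed

lemma tangent:
  fixes W :: "real \<Rightarrow> real"
  assumes convex: "convex_on {0..} W" and x: "x \<ge> 0" and c: "c \<ge> 0"
  and deriv: "(W has_real_derivative T) (at c within {0..})"
  shows "W x - W c \<ge> T * (x - c)"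
proof (cases "c = 0")
  case True
  then show ?thesis using tangent_at0[OF convex _ deriv[unfolded True]] x
    by (cases "x = 0") auto
next
  case False
  hence "c \<in> interior {0..}" using c by auto
  then show ?thesis using convex_on_imp_above_tangent[OF convex _ _ _ deriv] x
    by (auto simp: is_interval_connected)
qed
theorem proposition2p2:
  fixes i :: "'n::finite" and F :: "(real^'n) \<times> real \<times> real \<Rightarrow> real" and W :: "real \<Rightarrow> real"
    and c :: real and P :: "real^'n" and PE :: real
  assumes F_nonneg: "\<And>x. x \<in> input_dom \<Longrightarrow> 0 \<le> F x"
    and F_mono: "\<And>q E L q' E' L'. (q, E, L) \<in> input_dom \<Longrightarrow> (\<forall>j. q $ j \<le> q' $ j) \<Longrightarrow>
                   E \<le> E' \<Longrightarrow> L \<le> L' \<Longrightarrow> F (q, E, L) \<le> F (q', E', L')"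
    and F_usc: "usc_on input_dom F"
    and F_concave: "concave_on input_dom F"
    and F_hom: "\<And>x (t::real). x \<in> input_dom \<Longrightarrow> t > 0 \<Longrightarrow> F (t *\<^sub>R x) = t * F x"
    and F_bound: "\<And>q E L. (q, E, L) \<in> input_dom \<Longrightarrow> F (q, E, L) \<le> c * L"
    and W_pos: "\<And>L. 0 \<le> L \<Longrightarrow> W L > 0"
    and W_strict_mono: "strict_mono_on {0..} W"
    and W_lsc: "lsc_on {0..} W"
    and W_convex: "convex_on {0..} W"
    and W_growth: "filterlim (\<lambda>L. W L / L) at_top at_top"
    and P_pos: "\<And>j. P $ j > 0"
    and PE_pos: "PE > 0"
  shows "max_profit i F W P PE = convex_conj W (unit_max_profit i F P PE)
         \<and> (strict_convex_on {0..} W \<and> (\<forall>L\<ge>0. W differentiable (at L within {0..})) \<longrightarrow>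
             (\<forall>Ls qs Es. 0 \<le> Ls
                \<and> (W has_real_derivative (unit_max_profit i F P PE)) (at Ls within {0..})
                \<and> (\<forall>j. 0 \<le> qs $ j) \<and> 0 \<le> Es
                \<and> (\<forall>q E. (\<forall>j. 0 \<le> q $ j) \<and> 0 \<le> E \<longrightarrow>
                       unit_profit i F P PE q E \<le> unit_profit i F P PE qs Es)
                \<longrightarrow> (Ls *\<^sub>R qs, Ls * Es, Ls) \<in> input_dom
                    \<and> (\<forall>x\<in>input_dom. profit i F W P PE x \<le> profit i F W P PE (Ls *\<^sub>R qs, Ls * Es, Ls))))"
proof -
  define D where "D = {(q::real^'n, E::real). (\<forall>j. 0 \<le> q $ j) \<and> 0 \<le> E}"
  define u where "u = unit_profit i F P PE"
  define T where "T = unit_max_profit i F P PE"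
  define g where "g = (\<lambda>L. L * T - W L)"
  have T_def': "T = (SUP qE\<in>D. u (fst qE) (snd qE))"
    unfolding T_def unit_max_profit_def D_def u_def by simp
  have sumnn: "0 \<le> (\<Sum>j\<in>UNIV. P $ j * q $ j)" if "\<forall>j. 0 \<le> q $ j" for q :: "real^'n"
    using that P_pos by (intro sum_nonneg) (simp add: less_imp_le)
  have ubound: "u q E \<le> P $ i * c" if "(q, E) \<in> D" for q E
  proof -
    have "F (q, E, 1) \<le> c" using F_bound[of q E 1] that by (simp add: D_def input_dom_def)
    hence "P $ i * F (q, E, 1) \<le> P $ i * c" using P_pos[of i] by simp
    moreover have "0 \<le> PE * E" using that PE_pos by (simp add: D_def)
    ultimately show ?thesis using sumnn[of q] that unfolding u_def unit_profit_def D_def by auto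
  qed
  have D_ne: "D \<noteq> {}" unfolding D_def by (auto intro!: exI[of _ "0::real^'n"])
  have bddD: "bdd_above ((\<lambda>qE. u (fst qE) (snd qE)) ` D)"
    using ubound by (intro bdd_aboveI[of _ "P $ i * c"]) auto
  have uT: "u q E \<le> T" if "(q, E) \<in> D" for q E
    unfolding T_def' using cSUP_upper[OF that bddD] by simp
  have F0: "F (q, E, 0) = 0" if "(q, E, 0) \<in> input_dom" for q E
    using F_bound[OF that] F_nonneg[OF that] by simp
  have homp: "profit i F W P PE (L *\<^sub>R q, L * E, L) = L * u q E - W L"
    if "(q, E) \<in> D" "L > 0" for q E L
  proof -
    have "(q, E, 1) \<in> input_dom" using that by (simp add: D_def input_dom_def)
    from F_hom[OF this that(2)] have "F (L *\<^sub>R q, L * E, L) = L * F (q, E, 1)" by simp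
    moreover have "(\<Sum>j\<in>UNIV. P $ j * (L *\<^sub>R q) $ j) = L * (\<Sum>j\<in>UNIV. P $ j * q $ j)"
      by (simp add: sum_distrib_left mult_ac)
    ultimately show ?thesis unfolding profit_def u_def unit_profit_def by (simp add: algebra_simps)
  qed
  have prof_le: "profit i F W P PE x \<le> g (snd (snd x))" if "x \<in> input_dom" for x
  proof -
    obtain q E L where x: "x = (q, E, L)" by (cases x) auto
    have qE: "(\<forall>j. 0 \<le> q $ j)" "0 \<le> E" "0 \<le> L" using that x by (auto simp: input_dom_def)
    show ?thesis
    proof (cases "L = 0")
      case True
      have "F (q, E, 0) = 0" using F0 that x True by simp
      moreover have "0 \<le> PE * E" using qE PE_pos by simp
      ultimately show ?thesis using x True sumnn[OF qE(1)]
        by (simp add: profit_def g_def)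
    next
      case False
      hence L: "L > 0" using qE by simp
      let ?q = "(1/L) *\<^sub>R q" and ?E = "E / L"
      have D: "(?q, ?E) \<in> D" using qE L by (simp add: D_def)
      have eq: "x = (L *\<^sub>R ?q, L * ?E, L)" using x L by simp
      have "profit i F W P PE x = L * u ?q ?E - W L" using homp[OF D L] eq by simp
      also have "\<dots> \<le> L * T - W L" using uT[OF D] L by simp
      finally show ?thesis using x by (simp add: g_def)
    qed
  qed
  have bddg: "bdd_above (g ` {0..})"
  proof -
    have "eventually (\<lambda>L. W L / L \<ge> T) at_top"
      using W_growth by (simp add: filterlim_at_top)
    then obtain M where M: "\<And>L. L \<ge> M \<Longrightarrow> W L / L \<ge> T" by (auto simp: eventually_at_top_linorder)
    define M' where "M' = max M 1"
    have "g L \<le> M' * \<bar>T\<bar>" if "L \<in> {0..}" for L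
    proof (cases "L \<ge> M'")
      case True
      hence L: "L > 0" "L \<ge> M" unfolding M'_def by auto
      have "T \<le> W L / L" using M[OF L(2)] .
      hence "L * T \<le> W L" using L by (simp add: field_simps)
      moreover have "0 \<le> M' * \<bar>T\<bar>" unfolding M'_def by simp
      ultimately show ?thesis unfolding g_def by simp
    next
      case False
      have "W L > 0" using W_pos that by simp
      moreover have "L * T \<le> M' * \<bar>T\<bar>"
      proof -
        have "L * T \<le> L * \<bar>T\<bar>" using that by (intro mult_left_mono) auto
        also have "\<dots> \<le> M' * \<bar>T\<bar>" using False by (intro mult_right_mono) auto
        finally show ?thesis .
      qed
      ultimately show ?thesis unfolding g_def by simp
    qed
    then show ?thesis by (intro bdd_aboveI[of _ "M' * \<bar>T\<bar>"]) auto
  qed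
  have g_le_conj: "g L \<le> convex_conj W T" if "L \<ge> 0" for L
    unfolding convex_conj_def using cSUP_upper[OF _ bddg, of L] that by (simp add: g_def)
  have "((0::real^'n), (0::real), (0::real)) \<in> input_dom" by (simp add: input_dom_def)
  hence dom_ne: "input_dom \<noteq> ({} :: ((real^'n) \<times> real \<times> real) set)" by blast
  have bddp: "bdd_above (profit i F W P PE ` input_dom)"
  proof (intro bdd_aboveI[of _ "convex_conj W T"])
    fix y assume "y \<in> profit i F W P PE ` input_dom"
    then obtain x where x: "x \<in> input_dom" "y = profit i F W P PE x" by auto
    have "0 \<le> snd (snd x)" using x by (cases x) (auto simp: input_dom_def)
    then show "y \<le> convex_conj W T" using prof_le[OF x(1)] g_le_conj x(2) by force
  qed
  have mp_le: "max_profit i F W P PE \<le> convex_conj W T"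
    unfolding max_profit_def
  proof (rule cSUP_least[OF dom_ne])
    fix x :: "(real^'n) \<times> real \<times> real" assume x: "x \<in> input_dom"
    have "0 \<le> snd (snd x)" using x by (cases x) (auto simp: input_dom_def)
    then show "profit i F W P PE x \<le> convex_conj W T" using prof_le[OF x] g_le_conj by force
  qed
  have p_le_mp: "profit i F W P PE x \<le> max_profit i F W P PE" if "x \<in> input_dom" for x
    unfolding max_profit_def by (rule cSUP_upper[OF that bddp])
  have z: "((0::real^'n), (0::real), (0::real)) \<in> input_dom" by (simp add: input_dom_def)
  have p0: "profit i F W P PE (0, 0, 0) = - W 0"
    using F0[of 0 0] z by (simp add: profit_def)
  have conj_le: "convex_conj W T \<le> max_profit i F W P PE"
    unfolding convex_conj_def
  proof (rule cSUP_least)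
    show "{0::real..} \<noteq> {}" by auto
  next
    fix L :: real assume L: "L \<in> {0..}"
    show "L * T - W L \<le> max_profit i F W P PE"
    proof (cases "L = 0")
      case True
      then show ?thesis using p_le_mp[OF z] p0 by simp
    next
      case False
      hence L: "L > 0" using L by simp
      have "T \<le> (max_profit i F W P PE + W L) / L"
        unfolding T_def'
      proof (rule cSUP_least[OF D_ne])
        fix qE assume qE: "qE \<in> D"
        obtain q E where qE': "qE = (q, E)" by (cases qE) auto
        have "(L *\<^sub>R q, L * E, L) \<in> input_dom" using qE qE' L by (auto simp: D_def input_dom_def)
        from p_le_mp[OF this] homp[of q E L] qE qE' L
        have "L * u q E \<le> max_profit i F W P PE + W L" by simp
        then show "u (fst qE) (snd qE) \<le> (max_profit i F W P PE + W L) / L"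
          using L qE' by (simp add: field_simps)
      qed
      then show ?thesis using L by (simp add: field_simps)
    qed
  qed
  have part1: "max_profit i F W P PE = convex_conj W (unit_max_profit i F P PE)"
    using mp_le conj_le T_def by simp
  have part2: "(Ls *\<^sub>R qs, Ls * Es, Ls) \<in> input_dom
                    \<and> (\<forall>x\<in>input_dom. profit i F W P PE x \<le> profit i F W P PE (Ls *\<^sub>R qs, Ls * Es, Ls))"
    if Ls: "0 \<le> Ls" and dW: "(W has_real_derivative T) (at Ls within {0..})"
      and qs: "\<forall>j. 0 \<le> qs $ j" and Es: "0 \<le> Es"
      and opt: "\<forall>q E. (\<forall>j. 0 \<le> q $ j) \<and> 0 \<le> E \<longrightarrow> u q E \<le> u qs Es"
    for Ls qs Es
  proof -
    have inD: "(qs, Es) \<in> D" using qs Es by (simp add: D_def)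
    have "T \<le> u qs Es" unfolding T_def'
      by (rule cSUP_least[OF D_ne]) (use opt in \<open>auto simp: D_def\<close>)
    hence uqs: "u qs Es = T" using uT[OF inD] by simp
    have pstar: "profit i F W P PE (Ls *\<^sub>R qs, Ls * Es, Ls) = g Ls"
    proof (cases "Ls = 0")
      case True
      then show ?thesis using p0 by (simp add: g_def)
    next
      case False
      then show ?thesis using homp[OF inD] Ls uqs by (simp add: g_def)
    qed
    have mem: "(Ls *\<^sub>R qs, Ls * Es, Ls) \<in> input_dom" using Ls qs Es by (simp add: input_dom_def)
    have "profit i F W P PE x \<le> profit i F W P PE (Ls *\<^sub>R qs, Ls * Es, Ls)" if x: "x \<in> input_dom" for x
    proof -
      have L0: "0 \<le> snd (snd x)" using x by (cases x) (auto simp: input_dom_def)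
      have "W (snd (snd x)) - W Ls \<ge> T * (snd (snd x) - Ls)"
        by (rule tangent[OF W_convex L0 Ls dW])
      hence "g (snd (snd x)) \<le> g Ls" unfolding g_def by (simp add: algebra_simps)
      then show ?thesis using prof_le[OF x] pstar by simp
    qed
    then show ?thesis using mem by blast
  qed
  show ?thesis
    using part1 part2 unfolding u_def T_def by blast
qed

end
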